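(* Let $m_1,r\ge1$ be integers, $p\in[1,\infty)$, $q\in[1,\infty]$, $c_o>0$, and let $g:\mathbb{R}^{m_1}\to\mathbb{R}$, $g(x)=\sum_{i=1}^r c_i\,\sigma(w_i^Tx+b_i)$, where $c_i,b_i\in\mathbb{R}$, $w_i\in\mathbb{R}^{m_1}$, $\sum_{i=1}^r|c_i|\le c_o$ and $\|(b_i,w_i^T)\|_1=1$ for each $i$. Then for every integer $k\in[1,r]$, $$g\in\mathcal{N}^{k,\mathbf d^k}_{p,q,\,wid_k^{1/q},\,2c_o},$$ where $wid_k=\lceil r/k\rceil+2m_1+3$ and $\mathbf d^k=(m_1,wid_k,\dots,wid_k,1)$ (with $d^k_0=m_1$, $d^k_i=wid_k$ for $i=1,\dots,k$, $d^k_{k+1}=1$).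
   Context: $\sigma(u)=\max(u,0)$, applied coordinatewise; $wid_k^{1/\infty}=1$. For a real $s_1\times s_2$ matrix $A=(a_{ij})$: $\|A\|_{p,q}=\big(\sum_{j=1}^{s_2}(\sum_{i=1}^{s_1}|a_{ij}|^p)^{q/p}\big)^{1/q}$ for $q<\infty$, $\|A\|_{p,\infty}=\max_j(\sum_{i}|a_{ij}|^p)^{1/p}$. An affine map $T:\mathbb{R}^{a}\to\mathbb{R}^{b}$, $T(u)=W^Tu+B$, is identified with $\tilde V\in\mathbb{R}^{(a+1)\times b}$ whose first row is $B^T$ and remaining rows form $W$; $\|T\|_{p,q}:=\|\tilde V\|_{p,q}$. For $k\ge0$, width vector $\mathbf d=(d_0,\dots,d_{k+1})$ and $c,c_o>0$, $\mathcal{N}^{k,\mathbf d}_{p,q,c,c_o}$ is the set of all $f=T_{k+1}\circ\sigma\circ T_k\circ\cdots\circ\sigma\circ T_1:\mathbb{R}^{d_0}\to\mathbb{R}^{d_{k+1}}$ with affine $T_i:\mathbb{R}^{d_{i-1}}\to\mathbb{R}^{d_i}$, $\|T_i\|_{p,q}=c$ for $i\le k$ and $\|T_{k+1}\|_{p,q}\le c_o$. *)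

theory Defs
  imports "HOL-Analysis.Analysis"
begin

text \<open>Vectors of R^n are represented as functions nat => real (only indices < n matter);
  an s1 x s2 matrix as nat => nat => real (only indices i < s1, j < s2 matter).\<close>

definition relu :: "real \<Rightarrow> real" where
  "relu u = max u 0"

definition pq_norm :: "real \<Rightarrow> ereal \<Rightarrow> nat \<Rightarrow> nat \<Rightarrow> (nat \<Rightarrow> nat \<Rightarrow> real) \<Rightarrow> real" where
  "pq_norm p q s1 s2 A =
     (if q = \<infinity> then Max ((\<lambda>j. (\<Sum>i<s1. \<bar>A i j\<bar> powr p) powr (1/p)) ` {..<s2})
      else (\<Sum>j<s2. ((\<Sum>i<s1. \<bar>A i j\<bar> powr p) powr (real_of_ereal q / p)))
             powr (1 / real_of_ereal q))"

text \<open>Affine map R^a -> R^b given by the (a+1) x b matrix V: first row is the bias B^T,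
  the remaining rows form W; T(u) = W^T u + B.\<close>
definition affine_map :: "(nat \<Rightarrow> nat \<Rightarrow> real) \<Rightarrow> nat \<Rightarrow> nat \<Rightarrow> (nat \<Rightarrow> real) \<Rightarrow> (nat \<Rightarrow> real)" where
  "affine_map V a b u = (\<lambda>j. if j < b then V 0 j + (\<Sum>i<a. V (Suc i) j * u i) else 0)"

fun hidden :: "(nat \<Rightarrow> nat \<Rightarrow> nat \<Rightarrow> real) \<Rightarrow> (nat \<Rightarrow> nat) \<Rightarrow> nat \<Rightarrow> (nat \<Rightarrow> real) \<Rightarrow> (nat \<Rightarrow> real)" where
  "hidden Ts d 0 x = x"
| "hidden Ts d (Suc i) x =
     (\<lambda>j. relu (affine_map (Ts (Suc i)) (d i) (d (Suc i)) (hidden Ts d i x) j))"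

definition net_eval :: "(nat \<Rightarrow> nat \<Rightarrow> nat \<Rightarrow> real) \<Rightarrow> (nat \<Rightarrow> nat) \<Rightarrow> nat \<Rightarrow> (nat \<Rightarrow> real) \<Rightarrow> (nat \<Rightarrow> real)" where
  "net_eval Ts d k x = affine_map (Ts (Suc k)) (d k) (d (Suc k)) (hidden Ts d k x)"

text \<open>The class N^{k,d}_{p,q,c,c_o}: functions R^(d 0) -> R^(d (k+1)) (compared on inputs
  supported in {..<d 0} and on output coordinates < d (k+1)).\<close>
definition NN :: "nat \<Rightarrow> (nat \<Rightarrow> nat) \<Rightarrow> real \<Rightarrow> ereal \<Rightarrow> real \<Rightarrow> real \<Rightarrow> ((nat \<Rightarrow> real) \<Rightarrow> (nat \<Rightarrow> real)) set" where
  "NN k d p q c co = {f. \<exists>Ts.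
      (\<forall>i\<in>{1..k}. pq_norm p q (d (i - 1) + 1) (d i) (Ts i) = c) \<and>
      pq_norm p q (d k + 1) (d (Suc k)) (Ts (Suc k)) \<le> co \<and>
      (\<forall>x. (\<forall>i\<ge>d 0. x i = 0) \<longrightarrow> (\<forall>j<d (Suc k). f x j = net_eval Ts d k x j))}"

definition pow_inv_q :: "real \<Rightarrow> ereal \<Rightarrow> real" where
  "pow_inv_q w q = (if q = \<infinity> then 1 else w powr (1 / real_of_ereal q))"

end

theory Submission
  imports Defs
begin


definition dl :: "nat \<Rightarrow> nat \<Rightarrow> real" where
  "dl a i = (if i = a then 1 else 0)"

lemma sum_dl_mult: "a < R \<Longrightarrow> (\<Sum>i<R. dl a i * f i) = f a"
proof -
  assume "a < R"
  have "(\<Sum>i<R. dl a i * f i) = (\<Sum>i<R. if a = i then f a else 0)"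
    by (rule sum.cong) (auto simp: dl_def)
  then show ?thesis using \<open>a < R\<close> by simp
qed

lemma sum_dlsum_mult:
  assumes "finite T" "\<forall>t\<in>T. g t < R"
  shows "(\<Sum>i<R. (\<Sum>t\<in>T. f t * dl (g t) i) * e i) = (\<Sum>t\<in>T. f t * e (g t))"
proof -
  have "(\<Sum>i<R. (\<Sum>t\<in>T. f t * dl (g t) i) * e i) = (\<Sum>t\<in>T. f t * (\<Sum>i<R. dl (g t) i * e i))"
    by (simp add: sum_distrib_right sum_distrib_left sum.swap[of _ T] mult.assoc)
  also have "\<dots> = (\<Sum>t\<in>T. f t * e (g t))"
    using assms by (intro sum.cong) (auto simp: sum_dl_mult)
  finally show ?thesis .
qed

lemma sum_dl_abs_le: "(\<Sum>i<R. dl a i) \<le> 1"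
  by (simp add: dl_def sum.delta)

lemma abs_dlsum_le:
  assumes "finite T"
  shows "(\<Sum>i<R. \<bar>\<Sum>t\<in>T. f t * dl (g t) i\<bar>) \<le> (\<Sum>t\<in>T. \<bar>f t\<bar>)"
proof -
  have "(\<Sum>i<R. \<bar>\<Sum>t\<in>T. f t * dl (g t) i\<bar>) \<le> (\<Sum>i<R. \<Sum>t\<in>T. \<bar>f t\<bar> * dl (g t) i)"
    by (intro sum_mono order.trans[OF sum_abs]) (simp add: abs_mult dl_def)
  also have "\<dots> = (\<Sum>t\<in>T. \<bar>f t\<bar> * (\<Sum>i<R. dl (g t) i))"
    by (simp add: sum.swap[of _ T] sum_distrib_left)
  also have "\<dots> \<le> (\<Sum>t\<in>T. \<bar>f t\<bar>)"
    by (intro sum_mono) (simp add: mult_left_le sum_dl_abs_le sum_nonneg dl_def)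
  finally show ?thesis .
qed

lemma abs_dl_le: "(\<Sum>i<R. \<bar>f * dl a i\<bar>) \<le> \<bar>f\<bar>"
  using abs_dlsum_le[of "{()}" "\<lambda>_. f" "\<lambda>_. a" R] by simp

lemma psum_dl: "a < R \<Longrightarrow> p > 0 \<Longrightarrow> (\<Sum>i<R. \<bar>f * dl a i\<bar> powr p) = \<bar>f\<bar> powr p"
proof -
  assume "a < R" "p > 0"
  have "(\<Sum>i<R. \<bar>f * dl a i\<bar> powr p) = (\<Sum>i<R. if a = i then \<bar>f\<bar> powr p else 0)"
    by (rule sum.cong) (auto simp: dl_def)
  then show ?thesis using \<open>a < R\<close> by simp
qed

lemma pnorm_le:
  fixes a :: "nat \<Rightarrow> real"
  assumes "p \<ge> 1" "finite A"
  shows "(\<Sum>i\<in>A. \<bar>a i\<bar> powr p) \<le> (\<Sum>i\<in>A. \<bar>a i\<bar>) powr p"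
proof (cases "(\<Sum>i\<in>A. \<bar>a i\<bar>) = 0")
  case True
  then have "\<forall>i\<in>A. a i = 0" using assms(2) by (simp add: sum_nonneg_eq_0_iff)
  then show ?thesis by simp
next
  case False
  define S where "S = (\<Sum>i\<in>A. \<bar>a i\<bar>)"
  have Spos: "S > 0" using False unfolding S_def by (simp add: order_le_neq_trans sum_nonneg)
  have "\<bar>a i\<bar> powr p \<le> \<bar>a i\<bar> * S powr (p - 1)" if "i \<in> A" for i
  proof (cases "a i = 0")
    case True then show ?thesis by simp
  next
    case False
    have le: "\<bar>a i\<bar> \<le> S" unfolding S_def using that assms(2)
      by (intro member_le_sum) auto
    have "\<bar>a i\<bar> powr p = \<bar>a i\<bar> * \<bar>a i\<bar> powr (p - 1)"
      using False by (simp add: powr_mult_base)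
    also have "\<dots> \<le> \<bar>a i\<bar> * S powr (p - 1)"
      using le assms(1) False by (intro mult_left_mono powr_mono2) auto
    finally show ?thesis .
  qed
  then have "(\<Sum>i\<in>A. \<bar>a i\<bar> powr p) \<le> (\<Sum>i\<in>A. \<bar>a i\<bar> * S powr (p - 1))"
    by (rule sum_mono)
  also have "\<dots> = S * S powr (p - 1)" by (simp add: S_def sum_distrib_right)
  also have "\<dots> = S powr p" using Spos by (simp add: powr_mult_base)
  finally show ?thesis by (simp add: S_def)
qed

lemma pad_psum:
  fixes v :: "nat \<Rightarrow> real"
  assumes p: "p \<ge> 1" and n1: "(\<Sum>i<Suc R. \<bar>v i\<bar>) \<le> 1" and vR: "v R = 0"
  shows "(\<Sum>i<Suc R. \<bar>v i + (1 - (\<Sum>i<Suc R. \<bar>v i\<bar> powr p)) powr (1/p) * dl R i\<bar> powr p) = 1"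
proof -
  define S where "S = (\<Sum>i<Suc R. \<bar>v i\<bar> powr p)"
  have "S \<le> (\<Sum>i<Suc R. \<bar>v i\<bar>) powr p" unfolding S_def using p by (intro pnorm_le) auto
  also have "\<dots> \<le> 1 powr p" using n1 p by (intro powr_mono2) (auto intro: sum_nonneg)
  finally have S1: "S \<le> 1" by simp
  define t where "t = (1 - S) powr (1/p)"
  have tp: "t powr p = 1 - S"
  proof (cases "S = 1")
    case True then show ?thesis by (simp add: t_def)
  next
    case False then have "1 - S > 0" using S1 by simp
    then show ?thesis using p by (simp add: t_def powr_powr)
  qed
  have t0: "t \<ge> 0" by (simp add: t_def)
  have "(\<Sum>i<Suc R. \<bar>v i + t * dl R i\<bar> powr p) = (\<Sum>i<R. \<bar>v i\<bar> powr p) + t powr p"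
    using t0 by (simp add: dl_def vR)
  also have "(\<Sum>i<R. \<bar>v i\<bar> powr p) = S" using p by (simp add: S_def vR)
  finally show ?thesis using tp by (simp add: S_def t_def)
qed

lemma col_norm:
  assumes "\<forall>j<W. (\<Sum>i<R. \<bar>A i j\<bar> powr p) = 1" "W > 0" "p \<ge> 1" "q \<ge> 1"
  shows "pq_norm p q R W A = pow_inv_q (real W) q"
proof (cases "q = \<infinity>")
  case True
  have "(\<lambda>j. (\<Sum>i<R. \<bar>A i j\<bar> powr p) powr (1/p)) ` {..<W} = {1}"
    using assms(1,2) by auto
  then show ?thesis using True by (simp add: pq_norm_def pow_inv_q_def)
next
  case False
  have "(\<Sum>j<W. ((\<Sum>i<R. \<bar>A i j\<bar> powr p) powr (real_of_ereal q / p))) = real W"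
    using assms(1) by simp
  then show ?thesis using False by (simp add: pq_norm_def pow_inv_q_def)
qed

definition ext :: "(nat \<Rightarrow> real) \<Rightarrow> nat \<Rightarrow> real" where
  "ext u i = (if i = 0 then 1 else u (i - 1))"

lemma affine_ext: "j < b \<Longrightarrow> affine_map V a b u j = (\<Sum>i<Suc a. V i j * ext u i)"
  unfolding sum.lessThan_Suc_shift by (simp add: affine_map_def ext_def)

lemma out_norm:
  assumes p: "p \<ge> 1" and q: "q \<ge> 1"
  shows "pq_norm p q R 1 A \<le> (\<Sum>i<R. \<bar>A i 0\<bar>)"
proof -
  have pn: "(\<Sum>i<R. \<bar>A i 0\<bar> powr p) powr (1/p) \<le> (\<Sum>i<R. \<bar>A i 0\<bar>)"
  proof -
    have "(\<Sum>i<R. \<bar>A i 0\<bar> powr p) powr (1/p) \<le> ((\<Sum>i<R. \<bar>A i 0\<bar>) powr p) powr (1/p)"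
      using p by (intro powr_mono2 pnorm_le) (auto intro: sum_nonneg)
    also have "\<dots> = (\<Sum>i<R. \<bar>A i 0\<bar>)" using p by (simp add: powr_powr sum_nonneg)
    finally show ?thesis .
  qed
  show ?thesis
  proof (cases "q = \<infinity>")
    case True then show ?thesis using pn by (simp add: pq_norm_def lessThan_Suc)
  next
    case False
    then obtain qq where qq: "q = ereal qq" using q by (cases q) auto
    then have "qq \<ge> 1" using q by simp
    then have "((\<Sum>i<R. \<bar>A i 0\<bar> powr p) powr (qq / p)) powr (1/qq) = (\<Sum>i<R. \<bar>A i 0\<bar> powr p) powr (1/p)"
      using p by (simp add: powr_powr sum_nonneg)
    then show ?thesis using pn qq by (simp add: pq_norm_def)
  qed
qed




lemma sum_lessThan_plus: fixes a N :: nat shows "(\<Sum>i<a + N. f i) = (\<Sum>i<a. f i) + (\<Sum>t<N. f (a + t)::real)"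
  by (induction N) auto

locale cons =
  fixes m1 r k :: nat and p :: real and c b :: "nat \<Rightarrow> real" and w :: "nat \<Rightarrow> nat \<Rightarrow> real"
  assumes p1: "p \<ge> 1" and k1: "1 \<le> k"
    and l1: "\<And>i. i < r \<Longrightarrow> \<bar>b i\<bar> + (\<Sum>j<m1. \<bar>w i j\<bar>) = 1"
begin

definition "n = nat \<lceil>real r / real k\<rceil>"
definition "W = n + 2 * m1 + 3"
definition "cv i l = (if l = 0 then b i else w i (l - 1))"
definition "s i = (\<Sum>l<Suc m1. \<bar>cv i l\<bar> powr p) powr (1/p)"
definition "rho i = (if i < n then s i else 2)"
definition "pp i = rho i * max (c i) 0"
definition "nn i = rho i * max (- c i) 0"
definition "u i x = (\<Sum>j<m1. w i j * x j) + b i"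
definition "Dp M = (\<Sum>i<M * n. if i < r then pp i else 0)"
definition "Dn M = (\<Sum>i<M * n. if i < r then nn i else 0)"
definition "Sp M x = (\<Sum>i<M * n. if i < r then max (c i) 0 * relu (u i x) else 0)"
definition "Sn M x = (\<Sum>i<M * n. if i < r then max (- c i) 0 * relu (u i x) else 0)"

lemma cv_norm1: "i < r \<Longrightarrow> (\<Sum>l<Suc m1. \<bar>cv i l\<bar>) = 1"
  unfolding sum.lessThan_Suc_shift using l1 by (simp add: cv_def)

lemma s_pow: "s i powr p = (\<Sum>l<Suc m1. \<bar>cv i l\<bar> powr p)"
proof -
  have nn: "(\<Sum>l<Suc m1. \<bar>cv i l\<bar> powr p) \<ge> 0" by (rule sum_nonneg) auto
  show ?thesis unfolding s_def using p1 nn by (simp add: powr_powr del: sum.lessThan_Suc)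
qed

lemma s_pos: assumes "i < r" shows "s i > 0"
proof -
  have "\<not> (\<forall>l<Suc m1. cv i l = 0)"
  proof
    assume "\<forall>l<Suc m1. cv i l = 0"
    then have "(\<Sum>l<Suc m1. \<bar>cv i l\<bar>) = 0" by (intro sum.neutral) auto
    then show False using cv_norm1[OF assms] by simp
  qed
  then obtain l where "l < Suc m1" "cv i l \<noteq> 0" by auto
  then have "0 < \<bar>cv i l\<bar> powr p" by simp
  also have "\<dots> \<le> (\<Sum>l<Suc m1. \<bar>cv i l\<bar> powr p)"
    using \<open>l < Suc m1\<close> by (intro member_le_sum) auto
  finally show ?thesis by (simp add: s_def)
qed

lemma s_le: assumes "i < r" shows "s i \<le> 1"
proof -
  have "s i \<le> ((\<Sum>l<Suc m1. \<bar>cv i l\<bar>) powr p) powr (1/p)"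
    unfolding s_def using p1 by (intro powr_mono2 pnorm_le) (auto intro!: sum_nonneg simp del: sum.lessThan_Suc)
  then show ?thesis using cv_norm1[OF assms] by simp
qed

lemma rho_pos: "i < r \<Longrightarrow> rho i > 0"
  using s_pos by (simp add: rho_def)

lemma rho_le: "i < r \<Longrightarrow> rho i \<le> 2"
  using s_le[of i] by (auto simp: rho_def)

lemma rho_nonneg: "rho i \<ge> 0"
  by (simp add: rho_def s_def)

lemma sum_step: "(\<Sum>i<Suc M * n. f i) = (\<Sum>i<M * n. f i) + (\<Sum>t<n. f (M * n + t)::real)"
  using sum_lessThan_plus[of f "M * n" n] by (simp add: add.commute)

lemma Dp_nonneg: "Dp M \<ge> 0" by (simp add: Dp_def pp_def rho_nonneg sum_nonneg)
lemma Dn_nonneg: "Dn M \<ge> 0" by (simp add: Dn_def nn_def rho_nonneg sum_nonneg)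

lemma Dp0: assumes "Dp M = 0" shows "Sp M x = 0"
proof -
  have "\<forall>i\<in>{..<M*n}. (if i < r then pp i else 0) = 0"
    using assms unfolding Dp_def
    by (subst sum_nonneg_eq_0_iff[symmetric]) (auto simp: pp_def rho_nonneg)
  then have "\<forall>i<M*n. i < r \<longrightarrow> max (c i) 0 = 0"
  proof (intro allI impI)
    fix i assume "\<forall>i\<in>{..<M*n}. (if i < r then pp i else 0) = 0" "i < M*n" "i < r"
    then have "(if i < r then pp i else 0) = 0" by blast
    then have "rho i * max (c i) 0 = 0" using \<open>i < r\<close> by (simp add: pp_def)
    then show "max (c i) 0 = 0" using rho_pos[OF \<open>i < r\<close>] by simp
  qed
  then show ?thesis unfolding Sp_def by (intro sum.neutral) auto
qed

lemma Dn0: assumes "Dn M = 0" shows "Sn M x = 0"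
proof -
  have "\<forall>i\<in>{..<M*n}. (if i < r then nn i else 0) = 0"
    using assms unfolding Dn_def
    by (subst sum_nonneg_eq_0_iff[symmetric]) (auto simp: nn_def rho_nonneg)
  then have "\<forall>i<M*n. i < r \<longrightarrow> max (- c i) 0 = 0"
  proof (intro allI impI)
    fix i assume "\<forall>i\<in>{..<M*n}. (if i < r then nn i else 0) = 0" "i < M*n" "i < r"
    then have "(if i < r then nn i else 0) = 0" by blast
    then have "rho i * max (- c i) 0 = 0" using \<open>i < r\<close> by (simp add: nn_def)
    then show "max (- c i) 0 = 0" using rho_pos[OF \<open>i < r\<close>] by simp
  qed
  then show ?thesis unfolding Sn_def by (intro sum.neutral) auto
qed

lemma Dp_frac: "Dp M' / D * (Sp M' x / Dp M') = Sp M' x / D"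
  using Dp0[of M' x] by (cases "Dp M' = 0") auto

lemma Dn_frac: "Dn M' / D * (Sn M' x / Dn M') = Sn M' x / D"
  using Dn0[of M' x] by (cases "Dn M' = 0") auto

end



lemma sum_cdl: "a < R \<Longrightarrow> (\<Sum>i<R. (f * dl a i) * e i) = f * e a"
  using sum_dl_mult[of a R "\<lambda>i. f * e i"] by (simp add: sum_distrib_left mult_ac)

lemma relu_div: "s > 0 \<Longrightarrow> relu (a / s) = relu a / s"
  by (auto simp: relu_def max_def divide_le_0_iff)

lemma relu_nonneg: "relu a \<ge> 0" by (simp add: relu_def)
lemma relu_id: "a \<ge> 0 \<Longrightarrow> relu a = a" by (simp add: relu_def)
lemma relu_diff: "relu a - relu (- a) = a" by (simp add: relu_def max_def)

context cons begin

definition "H L x j = (if j < n then (if (L - 1) * n + j < r then relu (u ((L - 1) * n + j) x) / rho ((L - 1) * n + j) else 0)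
   else if j < n + m1 then relu (x (j - n))
   else if j < n + 2 * m1 then relu (- x (j - n - m1))
   else if j = n + 2 * m1 then Sp (L - 1) x / Dp (L - 1)
   else if j = n + 2 * m1 + 1 then Sn (L - 1) x / Dn (L - 1) else 0)"

definition "T1 i j = (if j < n then (if j < r then cv j i / s j else (-1) * dl 0 i)
   else if j < n + m1 then 1 * dl (Suc (j - n)) i
   else if j < n + 2 * m1 then (-1) * dl (Suc (j - n - m1)) i else (-1) * dl 0 i)"

lemma cv_ext: "(\<Sum>i<Suc m1. cv j i * ext x i) = u j x"
  unfolding sum.lessThan_Suc_shift by (simp add: cv_def ext_def u_def)

lemma layer1:
  assumes "j < W"
  shows "relu (affine_map T1 m1 W x j) = H 1 x j"
proof -
  have "relu (affine_map T1 m1 W x j) = relu (\<Sum>i<Suc m1. T1 i j * ext x i)"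
    using assms by (simp add: affine_ext)
  also have "\<dots> = H 1 x j"
  proof -
    consider "j < n" "j < r" | "j < n" "\<not> j < r" | "n \<le> j" "j < n + m1"
      | "n + m1 \<le> j" "j < n + 2 * m1" | "n + 2 * m1 \<le> j" by linarith
    then show ?thesis
    proof cases
      case 1
      have "(\<Sum>i<Suc m1. T1 i j * ext x i) = (\<Sum>i<Suc m1. cv j i * ext x i) / s j"
        unfolding sum_divide_distrib using 1 by (intro sum.cong) (simp_all add: T1_def)
      then show ?thesis using 1 s_pos[of j] cv_ext[of j x]
        by (simp add: relu_div H_def rho_def)
    next
      case 2
      have "(\<Sum>i<Suc m1. T1 i j * ext x i) = -1 * ext x 0"

      proof -
        have "(\<Sum>i<Suc m1. T1 i j * ext x i) = (\<Sum>i<Suc m1. ((-1) * dl (0) i) * ext x i)"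
          using 2 by (intro sum.cong) (auto simp: T1_def)
        also have "\<dots> = (-1) * ext x (0)" using 2 by (intro sum_cdl) auto
        finally show ?thesis .
      qed
      then show ?thesis using 2 by (simp add: H_def ext_def relu_def)
    next
      case 3
      have "(\<Sum>i<Suc m1. T1 i j * ext x i) = 1 * ext x (Suc (j - n))"

      proof -
        have "(\<Sum>i<Suc m1. T1 i j * ext x i) = (\<Sum>i<Suc m1. (1 * dl (Suc (j - n)) i) * ext x i)"
          using 3 by (intro sum.cong) (auto simp: T1_def)
        also have "\<dots> = 1 * ext x (Suc (j - n))" using 3 by (intro sum_cdl) auto
        finally show ?thesis .
      qed
      then show ?thesis using 3 by (simp add: H_def ext_def)
    next
      case 4
      have "(\<Sum>i<Suc m1. T1 i j * ext x i) = (-1) * ext x (Suc (j - n - m1))"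

      proof -
        have "(\<Sum>i<Suc m1. T1 i j * ext x i) = (\<Sum>i<Suc m1. ((-1) * dl (Suc (j - n - m1)) i) * ext x i)"
          using 4 by (intro sum.cong) (auto simp: T1_def)
        also have "\<dots> = (-1) * ext x (Suc (j - n - m1))" using 4 by (intro sum_cdl) auto
        finally show ?thesis .
      qed
      then show ?thesis using 4 by (simp add: H_def ext_def)
    next
      case 5
      have "(\<Sum>i<Suc m1. T1 i j * ext x i) = (-1) * ext x 0"

      proof -
        have "(\<Sum>i<Suc m1. T1 i j * ext x i) = (\<Sum>i<Suc m1. ((-1) * dl (0) i) * ext x i)"
          using 5 by (intro sum.cong) (auto simp: T1_def)
        also have "\<dots> = (-1) * ext x (0)" using 5 by (intro sum_cdl) auto
        finally show ?thesis .
      qed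
      then show ?thesis using 5 assms by (simp add: H_def ext_def relu_def Sp_def Sn_def W_def)
    qed
  qed
  finally show ?thesis .
qed

lemma T1_norm:
  assumes "j < W"
  shows "(\<Sum>i<Suc m1. \<bar>T1 i j\<bar> powr p) = 1"
proof -
  have p0: "p > 0" using p1 by simp
  consider "j < n" "j < r" | "j < n" "\<not> j < r" | "n \<le> j" "j < n + m1"
      | "n + m1 \<le> j" "j < n + 2 * m1" | "n + 2 * m1 \<le> j" by linarith
  then show ?thesis
  proof cases
    case 1
    have sp: "s j > 0" using s_pos 1 by simp
    have "(\<Sum>i<Suc m1. \<bar>T1 i j\<bar> powr p) = (\<Sum>i<Suc m1. \<bar>cv j i\<bar> powr p) / s j powr p"
      unfolding sum_divide_distrib
    proof (intro sum.cong refl)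
      fix i
      have "T1 i j = cv j i / s j" using 1 by (simp add: T1_def)
      then have "\<bar>T1 i j\<bar> = \<bar>cv j i\<bar> / s j" using sp by (simp add: abs_divide)
      then show "\<bar>T1 i j\<bar> powr p = \<bar>cv j i\<bar> powr p / s j powr p"
        using sp by (simp add: powr_divide)
    qed
    then have "(\<Sum>i<Suc m1. \<bar>T1 i j\<bar> powr p) = s j powr p / s j powr p"
      by (simp only: s_pow)
    then show ?thesis using sp by simp
  next
    case 2
    have "(\<Sum>i<Suc m1. \<bar>T1 i j\<bar> powr p) = (\<Sum>i<Suc m1. \<bar>(-1) * dl 0 i\<bar> powr p)"
      using 2 by (intro sum.cong) (auto simp: T1_def)
    also have "\<dots> = \<bar>-1\<bar> powr p" using p0 by (intro psum_dl) auto
    finally show ?thesis by simp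
  next
    case 3
    have "(\<Sum>i<Suc m1. \<bar>T1 i j\<bar> powr p) = (\<Sum>i<Suc m1. \<bar>1 * dl (Suc (j - n)) i\<bar> powr p)"
      using 3 by (intro sum.cong) (auto simp: T1_def)
    also have "\<dots> = \<bar>1\<bar> powr p" using p0 3 by (intro psum_dl) auto
    finally show ?thesis by simp
  next
    case 4
    have "(\<Sum>i<Suc m1. \<bar>T1 i j\<bar> powr p) = (\<Sum>i<Suc m1. \<bar>(-1) * dl (Suc (j - n - m1)) i\<bar> powr p)"
      using 4 by (intro sum.cong) (auto simp: T1_def)
    also have "\<dots> = \<bar>-1\<bar> powr p" using p0 4 by (intro psum_dl) auto
    finally show ?thesis by simp
  next
    case 5
    have "(\<Sum>i<Suc m1. \<bar>T1 i j\<bar> powr p) = (\<Sum>i<Suc m1. \<bar>(-1) * dl 0 i\<bar> powr p)"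
      using 5 by (intro sum.cong) (auto simp: T1_def)
    also have "\<dots> = \<bar>-1\<bar> powr p" using p0 by (intro psum_dl) auto
    finally show ?thesis by simp
  qed
qed

end



lemma aff2:
  fixes N :: nat
  assumes "a < R" "\<forall>t<N. g t < R"
  shows "(\<Sum>i<R. (\<alpha> * dl a i + (\<Sum>t<N. f t * dl (g t) i)) * e i) = \<alpha> * e a + (\<Sum>t<N. f t * e (g t))"
proof -
  have "(\<Sum>i<R. (\<alpha> * dl a i + (\<Sum>t<N. f t * dl (g t) i)) * e i)
      = (\<Sum>i<R. (\<alpha> * dl a i) * e i) + (\<Sum>i<R. (\<Sum>t<N. f t * dl (g t) i) * e i)"
    by (simp add: distrib_right sum.distrib)
  also have "\<dots> = \<alpha> * e a + (\<Sum>t<N. f t * e (g t))"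
    using assms sum_cdl[OF assms(1)] sum_dlsum_mult[of "{..<N}" g R f e] by simp
  finally show ?thesis .
qed

lemma aff3:
  fixes N :: nat
  assumes "a < R" "\<forall>t<N. g t < R" "\<forall>t<N. h t < R"
  shows "(\<Sum>i<R. (\<alpha> * dl a i + (\<Sum>t<N. f t * dl (g t) i) + (\<Sum>t<N. f' t * dl (h t) i)) * e i)
     = \<alpha> * e a + (\<Sum>t<N. f t * e (g t)) + (\<Sum>t<N. f' t * e (h t))"
proof -
  have "(\<Sum>i<R. (\<alpha> * dl a i + (\<Sum>t<N. f t * dl (g t) i) + (\<Sum>t<N. f' t * dl (h t) i)) * e i)
      = (\<Sum>i<R. (\<alpha> * dl a i) * e i) + (\<Sum>i<R. (\<Sum>t<N. f t * dl (g t) i) * e i)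
        + (\<Sum>i<R. (\<Sum>t<N. f' t * dl (h t) i) * e i)"
    by (simp add: distrib_right sum.distrib)
  also have "\<dots> = \<alpha> * e a + (\<Sum>t<N. f t * e (g t)) + (\<Sum>t<N. f' t * e (h t))"
    using assms sum_cdl[OF assms(1)] sum_dlsum_mult[of "{..<N}" g R f e] sum_dlsum_mult[of "{..<N}" h R f' e] by simp
  finally show ?thesis .
qed

lemma abs2:
  fixes N :: nat
  shows "(\<Sum>i<R. \<bar>\<alpha> * dl a i + (\<Sum>t<N. f t * dl (g t) i)\<bar>) \<le> \<bar>\<alpha>\<bar> + (\<Sum>t<N. \<bar>f t\<bar>)"
proof -
  have "(\<Sum>i<R. \<bar>\<alpha> * dl a i + (\<Sum>t<N. f t * dl (g t) i)\<bar>)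
      \<le> (\<Sum>i<R. \<bar>\<alpha> * dl a i\<bar>) + (\<Sum>i<R. \<bar>\<Sum>t<N. f t * dl (g t) i\<bar>)"
    unfolding sum.distrib[symmetric] by (intro sum_mono abs_triangle_ineq)
  also have "\<dots> \<le> \<bar>\<alpha>\<bar> + (\<Sum>t<N. \<bar>f t\<bar>)"
    by (intro add_mono abs_dl_le abs_dlsum_le finite_lessThan)
  finally show ?thesis .
qed

lemma abs3:
  fixes N :: nat
  shows "(\<Sum>i<R. \<bar>\<alpha> * dl a i + (\<Sum>t<N. f t * dl (g t) i) + (\<Sum>t<N. f' t * dl (h t) i)\<bar>)
     \<le> \<bar>\<alpha>\<bar> + (\<Sum>t<N. \<bar>f t\<bar>) + (\<Sum>t<N. \<bar>f' t\<bar>)"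
proof -
  have "(\<Sum>i<R. \<bar>\<alpha> * dl a i + (\<Sum>t<N. f t * dl (g t) i) + (\<Sum>t<N. f' t * dl (h t) i)\<bar>)
      \<le> (\<Sum>i<R. \<bar>\<alpha> * dl a i + (\<Sum>t<N. f t * dl (g t) i)\<bar>) + (\<Sum>i<R. \<bar>\<Sum>t<N. f' t * dl (h t) i\<bar>)"
    unfolding sum.distrib[symmetric] by (intro sum_mono abs_triangle_ineq)
  also have "\<dots> \<le> \<bar>\<alpha>\<bar> + (\<Sum>t<N. \<bar>f t\<bar>) + (\<Sum>t<N. \<bar>f' t\<bar>)"
    by (intro add_mono abs2 abs_dlsum_le finite_lessThan)
  finally show ?thesis .
qed

context cons begin

definition "raw m i j = (if j < n then (if m * n + j < r then
      b (m * n + j) / 2 * dl 0 i + (\<Sum>t<m1. (w (m * n + j) t / 2) * dl (Suc (n + t)) i)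
        + (\<Sum>t<m1. (- w (m * n + j) t / 2) * dl (Suc (n + m1 + t)) i)
    else (-1) * dl 0 i)
  else if j < n + 2 * m1 then 1 * dl (Suc j) i
  else if j = n + 2 * m1 then Dp (m - 1) / Dp m * dl (Suc j) i
      + (\<Sum>t<n. (if (m - 1) * n + t < r then pp ((m - 1) * n + t) / Dp m else 0) * dl (Suc t) i)
  else if j = n + 2 * m1 + 1 then Dn (m - 1) / Dn m * dl (Suc j) i
      + (\<Sum>t<n. (if (m - 1) * n + t < r then nn ((m - 1) * n + t) / Dn m else 0) * dl (Suc t) i)
  else (-1) * dl 0 i)"

definition "padc m j = (1 - (\<Sum>i<Suc W. \<bar>raw m i j\<bar> powr p)) powr (1/p)"
definition "TM m i j = raw m i j + padc m j * dl W i"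

lemma raw_W: "j < W \<Longrightarrow> raw m W j = 0"
  by (simp add: raw_def dl_def W_def)

lemma Dp_step: "Dp (Suc M) = Dp M + (\<Sum>t<n. if M * n + t < r then pp (M * n + t) else 0)"
  unfolding Dp_def by (rule sum_step)
lemma Dn_step: "Dn (Suc M) = Dn M + (\<Sum>t<n. if M * n + t < r then nn (M * n + t) else 0)"
  unfolding Dn_def by (rule sum_step)
lemma Sp_step: "Sp (Suc M) x = Sp M x + (\<Sum>t<n. if M * n + t < r then max (c (M * n + t)) 0 * relu (u (M * n + t) x) else 0)"
  unfolding Sp_def by (rule sum_step)
lemma Sn_step: "Sn (Suc M) x = Sn M x + (\<Sum>t<n. if M * n + t < r then max (- c (M * n + t)) 0 * relu (u (M * n + t) x) else 0)"
  unfolding Sn_def by (rule sum_step)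

lemma pp_nonneg: "pp i \<ge> 0" by (simp add: pp_def rho_nonneg)
lemma nn_nonneg: "nn i \<ge> 0" by (simp add: nn_def rho_nonneg)

lemma raw_l1:
  assumes "j < W" "m \<ge> 1"
  shows "(\<Sum>i<Suc W. \<bar>raw m i j\<bar>) \<le> 1"
proof -
  obtain M where M: "m = Suc M" using assms(2) by (cases m) auto
  consider "j < n" "m * n + j < r" | "j < n" "\<not> m * n + j < r" | "n \<le> j" "j < n + 2 * m1"
    | "j = n + 2 * m1" | "j = n + 2 * m1 + 1" | "n + 2 * m1 + 1 < j" by linarith
  then show ?thesis
  proof cases
    case 1
    define i0 where "i0 = m * n + j"
    have "(\<Sum>i<Suc W. \<bar>raw m i j\<bar>) \<le> \<bar>b i0 / 2\<bar> + (\<Sum>t<m1. \<bar>w i0 t / 2\<bar>) + (\<Sum>t<m1. \<bar>- w i0 t / 2\<bar>)"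
      using 1 unfolding raw_def i0_def[symmetric] by (simp only: if_True) (rule abs3)
    also have "\<dots> = \<bar>b i0\<bar> / 2 + (\<Sum>t<m1. \<bar>w i0 t\<bar>)"
      by (simp add: sum_divide_distrib[symmetric])
    also have "\<dots> \<le> 1" using l1[of i0] 1 by (simp add: i0_def)
    finally show ?thesis .
  next
    case 2
    then have "(\<Sum>i<Suc W. \<bar>raw m i j\<bar>) = (\<Sum>i<Suc W. \<bar>(-1) * dl 0 i\<bar>)"
      by (intro sum.cong) (auto simp: raw_def)
    also have "\<dots> \<le> \<bar>-1\<bar>" by (rule abs_dl_le)
    finally show ?thesis by simp
  next
    case 3
    then have "(\<Sum>i<Suc W. \<bar>raw m i j\<bar>) = (\<Sum>i<Suc W. \<bar>1 * dl (Suc j) i\<bar>)"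
      by (intro sum.cong) (auto simp: raw_def)
    also have "\<dots> \<le> \<bar>1\<bar>" by (rule abs_dl_le)
    finally show ?thesis by simp
  next
    case 4
    have "(\<Sum>i<Suc W. \<bar>raw m i j\<bar>) \<le> \<bar>Dp (m - 1) / Dp m\<bar>
        + (\<Sum>t<n. \<bar>if (m - 1) * n + t < r then pp ((m - 1) * n + t) / Dp m else 0\<bar>)"
    proof -
      have eq: "raw m i j = Dp (m - 1) / Dp m * dl (Suc (n + 2 * m1)) i
        + (\<Sum>t<n. (if (m - 1) * n + t < r then pp ((m - 1) * n + t) / Dp m else 0) * dl (Suc t) i)" for i
        using 4 by (simp add: raw_def)
      show ?thesis unfolding eq by (rule abs2)
    qed
    also have "\<dots> = (Dp M + (\<Sum>t<n. if M * n + t < r then pp (M * n + t) else 0)) / Dp m"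
    proof -
      have "(\<Sum>t<n. \<bar>if (m - 1) * n + t < r then pp ((m - 1) * n + t) / Dp m else 0\<bar>)
          = (\<Sum>t<n. if M * n + t < r then pp (M * n + t) else 0) / Dp m"
        unfolding sum_divide_distrib by (intro sum.cong) (auto simp: M pp_nonneg Dp_nonneg)
      moreover have "\<bar>Dp (m - 1) / Dp m\<bar> = Dp M / Dp m" by (simp add: M Dp_nonneg)
      ultimately show ?thesis by (simp add: add_divide_distrib)
    qed
    also have "\<dots> \<le> 1" unfolding Dp_step[symmetric] M by (simp add: divide_le_eq_1)
    finally show ?thesis .
  next
    case 5
    have "(\<Sum>i<Suc W. \<bar>raw m i j\<bar>) \<le> \<bar>Dn (m - 1) / Dn m\<bar>
        + (\<Sum>t<n. \<bar>if (m - 1) * n + t < r then nn ((m - 1) * n + t) / Dn m else 0\<bar>)"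
    proof -
      have eq: "raw m i j = Dn (m - 1) / Dn m * dl (Suc (n + 2 * m1 + 1)) i
        + (\<Sum>t<n. (if (m - 1) * n + t < r then nn ((m - 1) * n + t) / Dn m else 0) * dl (Suc t) i)" for i
        using 5 by (simp add: raw_def)
      show ?thesis unfolding eq by (rule abs2)
    qed
    also have "\<dots> = (Dn M + (\<Sum>t<n. if M * n + t < r then nn (M * n + t) else 0)) / Dn m"
    proof -
      have "(\<Sum>t<n. \<bar>if (m - 1) * n + t < r then nn ((m - 1) * n + t) / Dn m else 0\<bar>)
          = (\<Sum>t<n. if M * n + t < r then nn (M * n + t) else 0) / Dn m"
        unfolding sum_divide_distrib by (intro sum.cong) (auto simp: M nn_nonneg Dn_nonneg)
      moreover have "\<bar>Dn (m - 1) / Dn m\<bar> = Dn M / Dn m" by (simp add: M Dn_nonneg)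
      ultimately show ?thesis by (simp add: add_divide_distrib)
    qed
    also have "\<dots> \<le> 1" unfolding Dn_step[symmetric] M by (simp add: divide_le_eq_1)
    finally show ?thesis .
  next
    case 6
    then have "(\<Sum>i<Suc W. \<bar>raw m i j\<bar>) = (\<Sum>i<Suc W. \<bar>(-1) * dl 0 i\<bar>)"
      by (intro sum.cong) (auto simp: raw_def)
    also have "\<dots> \<le> \<bar>-1\<bar>" by (rule abs_dl_le)
    finally show ?thesis by simp
  qed
qed

lemma TM_norm:
  assumes "j < W" "m \<ge> 1"
  shows "(\<Sum>i<Suc W. \<bar>TM m i j\<bar> powr p) = 1"
  unfolding TM_def padc_def using pad_psum[OF p1 raw_l1[OF assms] raw_W[OF assms(1)]] .


lemma Sp_nonneg: "Sp M x \<ge> 0" by (simp add: Sp_def relu_nonneg sum_nonneg)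
lemma Sn_nonneg: "Sn M x \<ge> 0" by (simp add: Sn_def relu_nonneg sum_nonneg)

lemma H_W: "H L x (W - 1) = 0" by (simp add: H_def W_def)

lemma TM_aff:
  assumes "j < W"
  shows "affine_map (TM m) W W v j = (\<Sum>i<Suc W. raw m i j * ext v i) + padc m j * ext v W"
proof -
  have "affine_map (TM m) W W v j = (\<Sum>i<Suc W. TM m i j * ext v i)" using assms by (rule affine_ext)
  also have "\<dots> = (\<Sum>i<Suc W. raw m i j * ext v i) + (\<Sum>i<Suc W. (padc m j * dl W i) * ext v i)"
    by (simp add: TM_def distrib_right sum.distrib)
  also have "(\<Sum>i<Suc W. (padc m j * dl W i) * ext v i) = padc m j * ext v W" by (rule sum_cdl) simp
  finally show ?thesis .
qed

lemma relu_half_sum: "ww / 2 * relu a + - ww / 2 * relu (- a) = ww * a / 2"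
proof -
  have "ww / 2 * relu a + - ww / 2 * relu (- a) = ww * (relu a - relu (- a)) / 2" by (simp add: algebra_simps)
  then show ?thesis by (simp add: relu_diff)
qed

lemma layer_mid:
  assumes "j < W" "m \<ge> 1"
  shows "relu (affine_map (TM m) W W (H m x) j) = H (Suc m) x j"
proof -
  obtain M where M: "m = Suc M" using assms(2) by (cases m) auto
  define e where "e = ext (H m x)"
  have eW: "e W = 0" using H_W[of m x] by (simp add: e_def ext_def W_def)
  have aff: "affine_map (TM m) W W (H m x) j = (\<Sum>i<Suc W. raw m i j * e i)"
    using TM_aff[OF assms(1)] eW by (simp add: e_def)
  consider "j < n" "m * n + j < r" | "j < n" "\<not> m * n + j < r" | "n \<le> j" "j < n + 2 * m1"
    | "j = n + 2 * m1" | "j = n + 2 * m1 + 1" | "n + 2 * m1 + 1 < j" by linarith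
  then show ?thesis
  proof cases
    case 1
    define i0 where "i0 = m * n + j"
    have eq: "raw m i j = b i0 / 2 * dl 0 i + (\<Sum>t<m1. (w i0 t / 2) * dl (Suc (n + t)) i)
        + (\<Sum>t<m1. (- w i0 t / 2) * dl (Suc (n + m1 + t)) i)" for i
      using 1 by (simp add: raw_def i0_def)
    have "(\<Sum>i<Suc W. raw m i j * e i) = b i0 / 2 * e 0 + (\<Sum>t<m1. w i0 t / 2 * e (Suc (n + t)))
        + (\<Sum>t<m1. - w i0 t / 2 * e (Suc (n + m1 + t)))"
      unfolding eq by (rule aff3) (auto simp: W_def)
    also have "\<dots> = b i0 / 2 + ((\<Sum>t<m1. w i0 t / 2 * relu (x t)) + (\<Sum>t<m1. - w i0 t / 2 * relu (- x t)))"
      by (simp add: e_def ext_def H_def)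
    also have "(\<Sum>t<m1. w i0 t / 2 * relu (x t)) + (\<Sum>t<m1. - w i0 t / 2 * relu (- x t))
        = (\<Sum>t<m1. w i0 t * x t) / 2"
      unfolding sum.distrib[symmetric] sum_divide_distrib by (intro sum.cong refl) (rule relu_half_sum)
    finally have "(\<Sum>i<Suc W. raw m i j * e i) = u i0 x / 2" by (simp add: u_def add_divide_distrib)
    moreover have "rho i0 = 2" using assms(2) by (simp add: rho_def i0_def M)
    ultimately have A: "affine_map (TM m) W W (H m x) j = u i0 x / 2" and r2: "rho i0 = 2"
      using aff by auto
    have "H (Suc m) x j = relu (u i0 x) / rho i0" using 1 by (simp add: H_def i0_def)
    then show ?thesis unfolding A r2 by (simp add: relu_div)
  next
    case 2
    have "(\<Sum>i<Suc W. raw m i j * e i) = (\<Sum>i<Suc W. ((-1) * dl 0 i) * e i)"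
      using 2 by (intro sum.cong) (auto simp: raw_def)
    also have "\<dots> = (-1) * e 0" by (rule sum_cdl) simp
    finally show ?thesis using aff 2 by (simp add: H_def e_def ext_def relu_def)
  next
    case 3
    have "(\<Sum>i<Suc W. raw m i j * e i) = (\<Sum>i<Suc W. (1 * dl (Suc j) i) * e i)"
      using 3 by (intro sum.cong) (auto simp: raw_def)
    also have "\<dots> = 1 * e (Suc j)" using 3 by (intro sum_cdl) (simp add: W_def)
    finally show ?thesis using aff 3 by (simp add: H_def e_def ext_def relu_def)
  next
    case 4
    have eq: "raw m i j = Dp (m - 1) / Dp m * dl (Suc (n + 2 * m1)) i
        + (\<Sum>t<n. (if (m - 1) * n + t < r then pp ((m - 1) * n + t) / Dp m else 0) * dl (Suc t) i)" for i
      using 4 by (simp add: raw_def)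
    have "(\<Sum>i<Suc W. raw m i j * e i) = Dp (m - 1) / Dp m * e (Suc (n + 2 * m1))
        + (\<Sum>t<n. (if (m - 1) * n + t < r then pp ((m - 1) * n + t) / Dp m else 0) * e (Suc t))"
      unfolding eq by (rule aff2) (auto simp: W_def)
    also have "\<dots> = Dp M / Dp m * (Sp M x / Dp M)
        + (\<Sum>t<n. if M * n + t < r then max (c (M * n + t)) 0 * relu (u (M * n + t) x) else 0) / Dp m"
      unfolding sum_divide_distrib
    proof (intro arg_cong2[where f = "(+)"] sum.cong refl)
      show "Dp (m - 1) / Dp m * e (Suc (n + 2 * m1)) = Dp M / Dp m * (Sp M x / Dp M)"
        by (simp add: e_def ext_def H_def M)
    next
      fix t assume "t \<in> {..<n}"
      then have t: "t < n" by simp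
      show "(if (m - 1) * n + t < r then pp ((m - 1) * n + t) / Dp m else 0) * e (Suc t)
          = (if M * n + t < r then max (c (M * n + t)) 0 * relu (u (M * n + t) x) else 0) / Dp m"
      proof (cases "M * n + t < r")
        case True
        then have "rho (M * n + t) > 0" by (rule rho_pos)
        then show ?thesis using True t by (simp add: e_def ext_def H_def M pp_def)
      qed (simp add: M)
    qed
    also have "\<dots> = Sp m x / Dp m"
      unfolding Dp_frac M Sp_step by (simp add: add_divide_distrib)
    finally have val: "(\<Sum>i<Suc W. raw m i j * e i) = Sp m x / Dp m" .
    have "Sp m x / Dp m \<ge> 0" using Sp_nonneg Dp_nonneg by simp
    then show ?thesis using aff val 4 by (simp add: H_def relu_id)
  next
    case 5
    have eq: "raw m i j = Dn (m - 1) / Dn m * dl (Suc (n + 2 * m1 + 1)) i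
        + (\<Sum>t<n. (if (m - 1) * n + t < r then nn ((m - 1) * n + t) / Dn m else 0) * dl (Suc t) i)" for i
      using 5 by (simp add: raw_def)
    have "(\<Sum>i<Suc W. raw m i j * e i) = Dn (m - 1) / Dn m * e (Suc (n + 2 * m1 + 1))
        + (\<Sum>t<n. (if (m - 1) * n + t < r then nn ((m - 1) * n + t) / Dn m else 0) * e (Suc t))"
      unfolding eq by (rule aff2) (auto simp: W_def)
    also have "\<dots> = Dn M / Dn m * (Sn M x / Dn M)
        + (\<Sum>t<n. if M * n + t < r then max (- c (M * n + t)) 0 * relu (u (M * n + t) x) else 0) / Dn m"
      unfolding sum_divide_distrib
    proof (intro arg_cong2[where f = "(+)"] sum.cong refl)
      show "Dn (m - 1) / Dn m * e (Suc (n + 2 * m1 + 1)) = Dn M / Dn m * (Sn M x / Dn M)"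
        by (simp add: e_def ext_def H_def M)
    next
      fix t assume "t \<in> {..<n}"
      then have t: "t < n" by simp
      show "(if (m - 1) * n + t < r then nn ((m - 1) * n + t) / Dn m else 0) * e (Suc t)
          = (if M * n + t < r then max (- c (M * n + t)) 0 * relu (u (M * n + t) x) else 0) / Dn m"
      proof (cases "M * n + t < r")
        case True
        then have "rho (M * n + t) > 0" by (rule rho_pos)
        then show ?thesis using True t by (simp add: e_def ext_def H_def M nn_def)
      qed (simp add: M)
    qed
    also have "\<dots> = Sn m x / Dn m"
      unfolding Dn_frac M Sn_step by (simp add: add_divide_distrib)
    finally have val: "(\<Sum>i<Suc W. raw m i j * e i) = Sn m x / Dn m" .
    have "Sn m x / Dn m \<ge> 0" using Sn_nonneg Dn_nonneg by simp
    then show ?thesis using aff val 5 by (simp add: H_def relu_id)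
  next
    case 6
    have "(\<Sum>i<Suc W. raw m i j * e i) = (\<Sum>i<Suc W. ((-1) * dl 0 i) * e i)"
      using 6 by (intro sum.cong) (auto simp: raw_def)
    also have "\<dots> = (-1) * e 0" by (rule sum_cdl) simp
    finally show ?thesis using aff 6 by (simp add: H_def e_def ext_def relu_def)
  qed
qed

end



lemma sum_guard:
  fixes f :: "nat \<Rightarrow> real"
  assumes "r \<le> N"
  shows "(\<Sum>i<N. if i < r then f i else 0) = (\<Sum>i<r. f i)"
proof -
  have "(\<Sum>i<N. if i < r then f i else 0) = sum f ({..<N} \<inter> {i. i < r})"
    by (simp add: sum.If_cases)
  also have "{..<N} \<inter> {i. i < r} = {..<r}" using assms by auto
  finally show ?thesis by simp
qed

context cons begin

definition TO :: "nat \<Rightarrow> nat \<Rightarrow> real" where "TO i j = (\<Sum>t<n. (if (k - 1) * n + t < r then c ((k - 1) * n + t) * rho ((k - 1) * n + t) else 0) * dl (Suc t) i)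
   + Dp (k - 1) * dl (Suc (n + 2 * m1)) i + (- Dn (k - 1)) * dl (Suc (n + 2 * m1 + 1)) i"

lemma kn_ge: "r \<le> k * n"
proof -
  have k0: "real k > 0" using k1 by simp
  have "0 \<le> real r / real k" by simp
  then have h: "-1 < real r / real k" by linarith
  have c0: "\<lceil>real r / real k\<rceil> \<ge> 0" using h by simp
  have "real n = real_of_int \<lceil>real r / real k\<rceil>" using c0 by (simp add: n_def)
  then have "real r / real k \<le> real n" by (simp add: le_of_int_ceiling)
  then have "real r \<le> real k * real n" using k0 by (simp add: divide_le_eq mult.commute)
  then show ?thesis by (simp flip: of_nat_mult)
qed

lemma H_beyond: "W \<le> j \<Longrightarrow> H L x j = 0"
  by (simp add: H_def W_def)

lemma Dp_mult: "Dp M * (Sp M x / Dp M) = Sp M x"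
  using Dp0[of M x] by (cases "Dp M = 0") auto
lemma Dn_mult: "Dn M * (Sn M x / Dn M) = Sn M x"
  using Dn0[of M x] by (cases "Dn M = 0") auto

lemma out_val:
  "affine_map TO W 1 (H k x) 0 = (\<Sum>i<r. c i * relu (u i x))"
proof -
  obtain K where K0: "k = Suc K" using k1 by (cases k) auto
  then have K: "k - 1 = K" "k - Suc 0 = K" and kn: "k * n = Suc K * n" by auto
  define e where "e = ext (H k x)"
  have "affine_map TO W 1 (H k x) 0 = (\<Sum>i<Suc W. TO i 0 * e i)"
    unfolding e_def by (rule affine_ext) simp
  also have "\<dots> = (\<Sum>i<Suc W. (\<Sum>t<n. (if K * n + t < r then c (K * n + t) * rho (K * n + t) else 0) * dl (Suc t) i) * e i)
     + (\<Sum>i<Suc W. (Dp K * dl (Suc (n + 2 * m1)) i) * e i)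
     + (\<Sum>i<Suc W. ((- Dn K) * dl (Suc (n + 2 * m1 + 1)) i) * e i)"
    unfolding TO_def K(1) distrib_right sum.distrib by (rule refl)
  also have "\<dots> = (\<Sum>t<n. (if K * n + t < r then c (K * n + t) * rho (K * n + t) else 0) * e (Suc t))
     + Dp K * e (Suc (n + 2 * m1)) + (- Dn K) * e (Suc (n + 2 * m1 + 1))"
    by (subst sum_dlsum_mult, simp, simp add: W_def, subst sum_cdl, simp add: W_def, subst sum_cdl, simp add: W_def, rule refl)
  also have "\<dots> = (\<Sum>t<n. if K * n + t < r then c (K * n + t) * relu (u (K * n + t) x) else 0)
     + Sp K x - Sn K x"
  proof -
    have "(\<Sum>t<n. (if K * n + t < r then c (K * n + t) * rho (K * n + t) else 0) * e (Suc t))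
       = (\<Sum>t<n. if K * n + t < r then c (K * n + t) * relu (u (K * n + t) x) else 0)"
    proof (intro sum.cong refl)
      fix t assume "t \<in> {..<n}"
      then have t: "t < n" by simp
      show "(if K * n + t < r then c (K * n + t) * rho (K * n + t) else 0) * e (Suc t)
          = (if K * n + t < r then c (K * n + t) * relu (u (K * n + t) x) else 0)"
      proof (cases "K * n + t < r")
        case True
        then have "rho (K * n + t) > 0" by (rule rho_pos)
        then show ?thesis using True t by (simp add: e_def ext_def H_def K)
      qed simp
    qed
    moreover have "Dp K * e (Suc (n + 2 * m1)) = Sp K x"
      using Dp_mult[of K x] by (simp add: e_def ext_def H_def K)
    moreover have "(- Dn K) * e (Suc (n + 2 * m1 + 1)) = - Sn K x"
      using Dn_mult[of K x] by (simp add: e_def ext_def H_def K)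
    ultimately show ?thesis by simp
  qed
  also have "\<dots> = (\<Sum>i<k * n. if i < r then c i * relu (u i x) else 0)"
  proof -
    have cc: "c i * relu (u i x) = max (c i) 0 * relu (u i x) - max (- c i) 0 * relu (u i x)" for i
      by (simp add: max_def algebra_simps)
    have "(\<Sum>i<k * n. if i < r then c i * relu (u i x) else 0)
        = (\<Sum>i<K * n. if i < r then c i * relu (u i x) else 0)
          + (\<Sum>t<n. if K * n + t < r then c (K * n + t) * relu (u (K * n + t) x) else 0)"
      unfolding kn by (rule sum_step)
    moreover have "(\<Sum>i<K * n. if i < r then c i * relu (u i x) else 0) = Sp K x - Sn K x"
      unfolding Sp_def Sn_def sum_subtractf[symmetric] by (intro sum.cong refl) (simp add: cc)
    ultimately show ?thesis by simp
  qed
  also have "\<dots> = (\<Sum>i<r. c i * relu (u i x))" using kn_ge by (rule sum_guard)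
  finally show ?thesis .
qed

lemma out_l1:
  "(\<Sum>i<Suc W. \<bar>TO i 0\<bar>) \<le> 2 * (\<Sum>i<r. \<bar>c i\<bar>)"
proof -
  obtain K where K0: "k = Suc K" using k1 by (cases k) auto
  then have K: "k - 1 = K" "k - Suc 0 = K" and kn: "k * n = Suc K * n" by auto
  let ?A = "\<lambda>i. (\<Sum>t<n. (if K * n + t < r then c (K * n + t) * rho (K * n + t) else 0) * dl (Suc t) i)"
  let ?B = "\<lambda>i. Dp K * dl (Suc (n + 2 * m1)) i"
  let ?C = "\<lambda>i. (- Dn K) * dl (Suc (n + 2 * m1 + 1)) i"
  have "(\<Sum>i<Suc W. \<bar>TO i 0\<bar>) \<le> (\<Sum>i<Suc W. \<bar>?A i\<bar> + \<bar>?B i\<bar> + \<bar>?C i\<bar>)"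
  proof (intro sum_mono)
    fix i
    have TOeq: "TO i 0 = ?A i + ?B i + ?C i" unfolding TO_def K by simp
    show "\<bar>TO i 0\<bar> \<le> \<bar>?A i\<bar> + \<bar>?B i\<bar> + \<bar>?C i\<bar>" unfolding TOeq
      by (rule order.trans[OF abs_triangle_ineq add_mono[OF abs_triangle_ineq order.refl]])
  qed
  also have "\<dots> = (\<Sum>i<Suc W. \<bar>?A i\<bar>) + (\<Sum>i<Suc W. \<bar>?B i\<bar>) + (\<Sum>i<Suc W. \<bar>?C i\<bar>)"
    by (simp add: sum.distrib)
  also have "\<dots> \<le> (\<Sum>t<n. \<bar>if K * n + t < r then c (K * n + t) * rho (K * n + t) else 0\<bar>) + \<bar>Dp K\<bar> + \<bar>- Dn K\<bar>"
    by (intro add_mono abs_dlsum_le abs_dl_le finite_lessThan)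
  also have "\<dots> = (\<Sum>t<n. if K * n + t < r then rho (K * n + t) * \<bar>c (K * n + t)\<bar> else 0) + Dp K + Dn K"
    using Dp_nonneg[of K] Dn_nonneg[of K]
    by (simp add: abs_mult rho_nonneg if_distrib[where f = abs] mult.commute cong: if_cong)
  also have "\<dots> = (\<Sum>i<k * n. if i < r then rho i * \<bar>c i\<bar> else 0)"
  proof -
    have pn: "pp i + nn i = rho i * \<bar>c i\<bar>" for i
      by (simp add: pp_def nn_def max_def algebra_simps)
    have "Dp K + Dn K = (\<Sum>i<K * n. if i < r then rho i * \<bar>c i\<bar> else 0)"
      unfolding Dp_def Dn_def sum.distrib[symmetric] by (intro sum.cong refl) (simp add: pn)
    then show ?thesis unfolding kn sum_step by simp
  qed
  also have "\<dots> = (\<Sum>i<r. rho i * \<bar>c i\<bar>)" using kn_ge by (rule sum_guard)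
  also have "\<dots> \<le> (\<Sum>i<r. 2 * \<bar>c i\<bar>)"
    by (intro sum_mono mult_right_mono rho_le) auto
  finally show ?thesis by (simp add: sum_distrib_left)
qed

end



context cons begin

definition "Ts L = (if L = 1 then T1 else if L \<le> k then TM (L - 1) else TO)"
definition "dd i = (if i = 0 then m1 else if i \<le> k then W else 1)"

lemma hidden_eq: "1 \<le> L \<Longrightarrow> L \<le> k \<Longrightarrow> hidden Ts dd L x = H L x"
proof (induction L)
  case 0 then show ?case by simp
next
  case (Suc L)
  show ?case
  proof (cases "L = 0")
    case True
    show ?thesis
    proof
      fix j
      show "hidden Ts dd (Suc L) x j = H (Suc L) x j"
      proof (cases "j < W")
        case True
        then show ?thesis using \<open>L = 0\<close> Suc.prems layer1[OF True, of x] by (simp add: Ts_def dd_def)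
      next
        case False
        then show ?thesis using \<open>L = 0\<close> Suc.prems H_beyond[of j]
          by (simp add: Ts_def dd_def affine_map_def relu_def)
      qed
    qed
  next
    case False
    then have IH: "hidden Ts dd L x = H L x" using Suc by simp
    show ?thesis
    proof
      fix j
      show "hidden Ts dd (Suc L) x j = H (Suc L) x j"
      proof (cases "j < W")
        case True
        then show ?thesis using False Suc.prems layer_mid[OF True, of L x] IH by (simp add: Ts_def dd_def)
      next
        case j: False
        then show ?thesis using False Suc.prems H_beyond[of j]
          by (simp add: Ts_def dd_def affine_map_def relu_def)
      qed
    qed
  qed
qed

lemma in_NN:
  fixes q :: ereal and co :: real and g :: "(nat \<Rightarrow> real) \<Rightarrow> real"
  assumes q1: "1 \<le> q"
    and g: "\<And>x. g x = (\<Sum>i<r. c i * relu ((\<Sum>j<m1. w i j * x j) + b i))"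
    and co: "(\<Sum>i<r. \<bar>c i\<bar>) \<le> co"
  shows "(\<lambda>x j. g x) \<in> NN k dd p q (pow_inv_q (real W) q) (2 * co)"
  unfolding NN_def
proof (intro CollectI exI[of _ Ts] conjI allI impI)
  have W0: "W > 0" by (simp add: W_def)
  show "\<forall>i\<in>{1..k}. pq_norm p q (dd (i - 1) + 1) (dd i) (Ts i) = pow_inv_q (real W) q"
  proof
    fix i assume i: "i \<in> {1..k}"
    show "pq_norm p q (dd (i - 1) + 1) (dd i) (Ts i) = pow_inv_q (real W) q"
    proof (cases "i = 1")
      case True
      then show ?thesis using i T1_norm col_norm[where R="Suc m1" and A=T1, OF _ W0 p1 q1]
        by (simp add: Ts_def dd_def)
    next
      case False
      then have "i - 1 \<ge> 1" using i by auto
      moreover have "dd (i - 1) = W" "dd i = W" "Ts i = TM (i - 1)" using i False by (auto simp: dd_def Ts_def)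
      ultimately show ?thesis using i False TM_norm[of _ "i - 1"] col_norm[where R="Suc W" and A="TM (i - 1)", OF _ W0 p1 q1]
        by simp
    qed
  qed
  show "pq_norm p q (dd k + 1) (dd (Suc k)) (Ts (Suc k)) \<le> 2 * co"
  proof -
    have "pq_norm p q (dd k + 1) (dd (Suc k)) (Ts (Suc k)) = pq_norm p q (Suc W) 1 TO"
      using k1 by (simp add: Ts_def dd_def)
    also have "\<dots> \<le> (\<Sum>i<Suc W. \<bar>TO i 0\<bar>)" by (rule out_norm[OF p1 q1])
    also have "\<dots> \<le> 2 * (\<Sum>i<r. \<bar>c i\<bar>)" by (rule out_l1)
    also have "\<dots> \<le> 2 * co" using co by simp
    finally show ?thesis .
  qed
  fix x :: "nat \<Rightarrow> real" and j :: nat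
  assume j: "j < dd (Suc k)"
  then have j0: "j = 0" by (simp add: dd_def)
  have "net_eval Ts dd k x j = affine_map TO W 1 (H k x) 0"
    using k1 hidden_eq[of k x] j0 by (simp add: net_eval_def Ts_def dd_def)
  also have "\<dots> = g x" using out_val g by (simp add: u_def)
  finally show "g x = net_eval Ts dd k x j" by simp
qed

end


theorem lemma1:
  fixes m1 r k :: nat and p co :: real and q :: ereal
    and c b :: "nat \<Rightarrow> real" and w :: "nat \<Rightarrow> nat \<Rightarrow> real"
    and g :: "(nat \<Rightarrow> real) \<Rightarrow> real"
  assumes "m1 \<ge> 1" and "r \<ge> 1"
    and "1 \<le> p" and "1 \<le> q" and "co > 0"
    and "\<And>x. g x = (\<Sum>i<r. c i * relu ((\<Sum>j<m1. w i j * x j) + b i))"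
    and "(\<Sum>i<r. \<bar>c i\<bar>) \<le> co"
    and "\<And>i. i < r \<Longrightarrow> \<bar>b i\<bar> + (\<Sum>j<m1. \<bar>w i j\<bar>) = 1"
    and "1 \<le> k" and "k \<le> r"
  shows "(\<lambda>x j. g x) \<in>
           NN k (\<lambda>i. if i = 0 then m1 else if i \<le> k then nat \<lceil>real r / real k\<rceil> + 2 * m1 + 3 else 1)
              p q (pow_inv_q (real (nat \<lceil>real r / real k\<rceil> + 2 * m1 + 3)) q) (2 * co)"
proof -
  interpret cons m1 r k p c b w
    using assms by unfold_locales auto
  have X: "(\<lambda>x j. g x) \<in> NN k dd p q (pow_inv_q (real W) q) (2 * co)"
    by (rule in_NN[OF assms(4) assms(6) assms(7)])
  show ?thesis using X unfolding dd_def[abs_def] W_def n_def .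
qed

end
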